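(* Let $f : \{0,1\}^n \to \{0,1\}$ be a degree-1 threshold function, i.e. there are integers $a_1,\dots,a_n,b$ (of arbitrary magnitude) such that $f(x)=1$ if and only if $a_1x_1+\cdots+a_nx_n \le b$. Then for any partition of the variables $\{x_1,\dots,x_n\}$ into two parts $P_1,P_2$, where Alice sees the values of the variables in $P_1$ and Bob sees the values of the variables in $P_2$, $f$ can be computed by a public-coin randomized communication protocol with error probability $O(1/n)$ on every input and communication $O(\log n)$ bits (the constants in the $O(\cdot)$ being absolute, independent of $f$ and of the partition).
   Context: Randomized protocols are in the public-coin model: both players see all random coin flips. The error probability of the protocol on an input is the probability over the coins that it outputs a value different from $f$ of that input. *)

theory Defs
  imports "HOL-Probability.Probability"
begin

datatype ('x, 'y) protocol =
    Leaf bool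
  | AliceNode "'x \<Rightarrow> bool" "('x, 'y) protocol" "('x, 'y) protocol"
  | BobNode "'y \<Rightarrow> bool" "('x, 'y) protocol" "('x, 'y) protocol"

fun run_protocol :: "('x, 'y) protocol \<Rightarrow> 'x \<Rightarrow> 'y \<Rightarrow> bool" where
  "run_protocol (Leaf v) xa yb = v"
| "run_protocol (AliceNode m p0 p1) xa yb =
     (if m xa then run_protocol p1 xa yb else run_protocol p0 xa yb)"
| "run_protocol (BobNode m p0 p1) xa yb =
     (if m yb then run_protocol p1 xa yb else run_protocol p0 xa yb)"

fun protocol_cost :: "('x, 'y) protocol \<Rightarrow> nat" where
  "protocol_cost (Leaf v) = 0"
| "protocol_cost (AliceNode m p0 p1) = Suc (max (protocol_cost p0) (protocol_cost p1))"
| "protocol_cost (BobNode m p0 p1) = Suc (max (protocol_cost p0) (protocol_cost p1))"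

text \<open>A public-coin randomized protocol is a probability distribution over deterministic
  protocols (the public coins select the deterministic protocol).\<close>
type_synonym ('x, 'y) rand_protocol = "('x, 'y) protocol pmf"

definition rand_cost_le :: "('x, 'y) rand_protocol \<Rightarrow> real \<Rightarrow> bool" where
  "rand_cost_le R c \<longleftrightarrow> (\<forall>p \<in> set_pmf R. real (protocol_cost p) \<le> c)"

definition error_prob :: "('x, 'y) rand_protocol \<Rightarrow> 'x \<Rightarrow> 'y \<Rightarrow> bool \<Rightarrow> real" where
  "error_prob R xa yb v = measure_pmf.prob R {p. run_protocol p xa yb \<noteq> v}"

text \<open>Inputs in {0,1}^n are represented as x :: nat \<Rightarrow> bool (only x 0 .. x (n-1) matter).
  Degree-1 threshold function: f(x) = 1 iff sum a_i x_i \<le> b.\<close>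
definition threshold_fn :: "nat \<Rightarrow> (nat \<Rightarrow> int) \<Rightarrow> int \<Rightarrow> (nat \<Rightarrow> bool) \<Rightarrow> bool" where
  "threshold_fn n a b x \<longleftrightarrow> (\<Sum>i<n. a i * (if x i then 1 else 0)) \<le> b"

text \<open>The view of a player who sees exactly the variables in S.\<close>
definition view :: "nat set \<Rightarrow> (nat \<Rightarrow> bool) \<Rightarrow> (nat \<Rightarrow> bool)" where
  "view S x = (\<lambda>i. if i \<in> S then x i else False)"

end

theory Submission
  imports Defs
begin


fun bcount :: "('g \<Rightarrow> 'n \<Rightarrow> 'n) \<Rightarrow> ('g \<Rightarrow> 'n \<Rightarrow> bool) \<Rightarrow> 'g list \<Rightarrow> 'n \<Rightarrow> nat" where
  "bcount nx bd [] p = 0"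
| "bcount nx bd (G # cs) p = (if bd G p then 1 else 0) + bcount nx bd cs (nx G p)"

fun coins :: "'g pmf \<Rightarrow> nat \<Rightarrow> 'g list pmf" where
  "coins Gd 0 = return_pmf []"
| "coins Gd (Suc T) = bind_pmf Gd (\<lambda>G. map_pmf (Cons G) (coins Gd T))"

lemma set_coins: "cs \<in> set_pmf (coins Gd T) \<Longrightarrow> length cs = T"
  by (induction T arbitrary: cs) auto

lemma bcount_bound:
  assumes bad: "\<And>p. emeasure (measure_pmf Gd) {G. bd G p} \<le> ennreal q" and q: "0 \<le> q"
  shows "emeasure (measure_pmf (coins Gd T)) {cs. m \<le> bcount nx bd cs p}
           \<le> ennreal (real (T choose m) * q ^ m)"
proof (induction T arbitrary: p m)
  case 0
  then show ?case by (cases m) (auto simp: indicator_def)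
next
  case (Suc T)
  show ?case
  proof (cases m)
    case 0
    then show ?thesis by (simp add: measure_pmf.emeasure_le_1)
  next
    case (Suc m')
    let ?a = "ennreal (real (T choose m') * q ^ m')"
    let ?b = "ennreal (real (T choose m) * q ^ m)"
    have "emeasure (measure_pmf (coins Gd (Suc T))) {cs. m \<le> bcount nx bd cs p}
       = (\<integral>\<^sup>+G. emeasure (measure_pmf (coins Gd T)) {cs. m \<le> bcount nx bd (G # cs) p} \<partial>measure_pmf Gd)"
      by (simp add: vimage_def)
    also have "\<dots> \<le> (\<integral>\<^sup>+G. (?a * indicator {G. bd G p} G + ?b) \<partial>measure_pmf Gd)"
    proof (rule nn_integral_mono)
      fix G
      show "emeasure (measure_pmf (coins Gd T)) {cs. m \<le> bcount nx bd (G # cs) p}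
            \<le> ?a * indicator {G. bd G p} G + ?b"
      proof (cases "bd G p")
        case True
        then have "emeasure (measure_pmf (coins Gd T)) {cs. m \<le> bcount nx bd (G # cs) p}
           = emeasure (measure_pmf (coins Gd T)) {cs. m' \<le> bcount nx bd cs (nx G p)}"
          using Suc by simp
        also have "\<dots> \<le> ?a" using Suc.IH .
        finally show ?thesis using True by (simp add: add_increasing2)
      next
        case False
        then have "emeasure (measure_pmf (coins Gd T)) {cs. m \<le> bcount nx bd (G # cs) p}
           = emeasure (measure_pmf (coins Gd T)) {cs. m \<le> bcount nx bd cs (nx G p)}"
          by simp
        also have "\<dots> \<le> ?b" using Suc.IH .
        finally show ?thesis using False by simp
      qed
    qed
    also have "\<dots> = ?a * emeasure (measure_pmf Gd) {G. bd G p} + ?b"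
      by (simp add: nn_integral_add nn_integral_cmult_indicator measure_pmf.emeasure_space_1)
    also have "\<dots> \<le> ?a * ennreal q + ?b"
      by (intro add_mono mult_left_mono bad) auto
    also have "\<dots> = ennreal (real (T choose m') * q ^ m' * q + real (T choose m) * q ^ m)"
      using q by (simp add: ennreal_mult ennreal_plus)
    also have "\<dots> = ennreal (real (Suc T choose m) * q ^ m)"
      using Suc by (simp add: algebra_simps)
    finally show ?thesis .
  qed
qed



definition Gd :: "nat set \<Rightarrow> nat \<Rightarrow> (nat \<Rightarrow> nat) pmf" where
  "Gd D K = Pi_pmf D 0 (\<lambda>_. pmf_of_set {..<K})"

lemma collide:
  assumes D: "finite D" "a \<in> D" and ab: "a \<noteq> b" and K: "K > 0"
  shows "emeasure (measure_pmf (Gd D K)) {G. G a mod K = G b mod K} \<le> ennreal (1 / real K)"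
proof -
  define D' where "D' = D - {a}"
  have DD: "D = insert a D'" "finite D'" "a \<notin> D'" using D by (auto simp: D'_def)
  let ?U = "pmf_of_set {..<K}" and ?F = "Pi_pmf D' 0 (\<lambda>_. pmf_of_set {..<K})"
  have "Gd D K = map_pmf (\<lambda>(y,f). f(a:=y)) (pair_pmf ?U ?F)"
    unfolding Gd_def DD(1) by (rule Pi_pmf_insert[OF DD(2,3)])
  also have "\<dots> = map_pmf (\<lambda>(f,y). f(a:=y)) (pair_pmf ?F ?U)"
    by (subst pair_commute_pmf) (simp add: pmf.map_comp o_def case_prod_beta split_beta')
  finally have eq: "Gd D K = \<dots>" .
  have "emeasure (measure_pmf (Gd D K)) {G. G a mod K = G b mod K}
      = emeasure (measure_pmf (pair_pmf ?F ?U)) {(f,y). y mod K = f b mod K}"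
    unfolding eq using ab by (simp add: vimage_def case_prod_beta) (intro arg_cong[where f="emeasure _"], auto)
  also have "\<dots> = (\<integral>\<^sup>+x. indicator {(f,y). y mod K = f b mod K} x \<partial>pair_pmf ?F ?U)"
    by simp
  also have "\<dots> = (\<integral>\<^sup>+f. \<integral>\<^sup>+y. indicator {(f,y). y mod K = f b mod K} (f,y) \<partial>?U \<partial>?F)"
    by (rule nn_integral_pair_pmf')
  also have "\<dots> \<le> (\<integral>\<^sup>+f. ennreal (1 / real K) \<partial>?F)"
  proof (rule nn_integral_mono)
    fix f
    have "(\<integral>\<^sup>+y. indicator {(f,y). y mod K = f b mod K} (f,y) \<partial>?U) = (\<integral>\<^sup>+y. indicator {y. y mod K = f b mod K} y \<partial>?U)"
      by (intro nn_integral_cong) (auto simp: indicator_def)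
    also have "\<dots> = emeasure (measure_pmf ?U) {y. y mod K = f b mod K}" by simp
    also have "\<dots> = ennreal (real (card ({..<K} \<inter> {y. y mod K = f b mod K})) / real K)"
      using K by (subst emeasure_pmf_of_set) auto
    also have "\<dots> \<le> ennreal (1 / real K)"
      by (intro ennreal_leI divide_right_mono) (auto simp: card_le_Suc0_iff_eq)
    finally show "(\<integral>\<^sup>+y. indicator {(f,y). y mod K = f b mod K} (f,y) \<partial>?U) \<le> ennreal (1 / real K)" .
  qed
  also have "\<dots> = ennreal (1 / real K)" by (simp add: measure_pmf.emeasure_space_1)
  finally show ?thesis .
qed


fun intv :: "nat \<Rightarrow> bool list \<Rightarrow> nat \<times> nat" where
  "intv k [] = (0, 2^k)"
| "intv k (d # p) = (if k \<le> length p then intv k p else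
     (let lo = fst (intv k p); hi = snd (intv k p); mid = (lo + hi) div 2 in
      if d then (mid, hi) else (lo, mid)))"

lemma intv_len: "snd (intv k p) = fst (intv k p) + 2 ^ (k - min k (length p))"
proof (induction p)
  case Nil then show ?case by simp
next
  case (Cons d p)
  show ?case
  proof (cases "k \<le> length p")
    case True then show ?thesis using Cons by simp
  next
    case False
    then obtain e where e: "k - length p = Suc e" by (metis Suc_diff_Suc not_le)
    then have e2: "k - min k (length (d#p)) = e" using False by simp
    have "(fst (intv k p) + snd (intv k p)) div 2 = fst (intv k p) + 2^e"
      using Cons False e by simp
    then show ?thesis using Cons False e e2 by (auto simp: Let_def)
  qed
qed

lemma intv_sub: "fst (intv k p) \<le> fst (intv k (d # p)) \<and> snd (intv k (d # p)) \<le> snd (intv k p)"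
  using intv_len[of k p] by (auto simp: Let_def)

definition correct :: "nat \<Rightarrow> nat \<Rightarrow> bool list \<Rightarrow> bool" where
  "correct k ell p \<longleftrightarrow> fst (intv k p) \<le> ell \<and> ell < snd (intv k p)"

lemma correct_parent: "correct k ell (d # p) \<Longrightarrow> correct k ell p"
  using intv_sub[of k p d] unfolding correct_def by linarith

lemma correct_root: "ell < 2^k \<Longrightarrow> correct k ell []"
  by (simp add: correct_def)

fun cdepth :: "nat \<Rightarrow> nat \<Rightarrow> bool list \<Rightarrow> nat" where
  "cdepth k ell [] = 0"
| "cdepth k ell (d # p) = (if correct k ell (d # p) then Suc (length p) else cdepth k ell p)"

lemma cdepth_le: "cdepth k ell p \<le> length p"
  by (induction p) auto

lemma cdepth_correct: "correct k ell p \<Longrightarrow> cdepth k ell p = length p"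
  by (cases p) auto

definition psi :: "nat \<Rightarrow> nat \<Rightarrow> bool list \<Rightarrow> int" where
  "psi k ell p = 2 * int (cdepth k ell p) - int (length p)"

definition nxt :: "nat \<Rightarrow> (nat \<Rightarrow> bool) \<Rightarrow> bool list \<Rightarrow> bool list" where
  "nxt k t p = (let lo = fst (intv k p); hi = snd (intv k p) in
     if \<not> t lo \<or> t hi then tl p
     else if k \<le> length p then True # p
     else if t ((lo + hi) div 2) then True # p else False # p)"

definition good :: "nat \<Rightarrow> nat \<Rightarrow> (nat \<Rightarrow> bool) \<Rightarrow> bool list \<Rightarrow> bool" where
  "good k ell t p \<longleftrightarrow> (let lo = fst (intv k p); hi = snd (intv k p) in
     t lo = (lo \<le> ell) \<and> t hi = (hi \<le> ell) \<and>
     (length p < k \<longrightarrow> t ((lo + hi) div 2) = ((lo + hi) div 2 \<le> ell)))"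

lemma psi_child: "psi k ell (d # p) \<ge> psi k ell p - 1"
  using cdepth_le[of k ell p] by (auto simp: psi_def)

lemma psi_parent: assumes "ell < 2^k" shows "psi k ell (tl p) \<ge> psi k ell p - 1"
proof (cases p)
  case Nil then show ?thesis by simp
next
  case (Cons d q)
  show ?thesis
  proof (cases "correct k ell p")
    case True
    then have "correct k ell q" using Cons correct_parent by blast
    then show ?thesis using True Cons by (simp add: psi_def cdepth_correct)
  next
    case False
    then show ?thesis using Cons by (simp add: psi_def)
  qed
qed

lemma psi_any: assumes "ell < 2^k" shows "psi k ell (nxt k t p) \<ge> psi k ell p - 1"
  using psi_child[where p=p] psi_parent[OF assms, of p]
  by (auto simp: nxt_def Let_def)

lemma psi_good: assumes ell: "ell < 2^k" and g: "good k ell t p"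
  shows "psi k ell (nxt k t p) \<ge> psi k ell p + 1"
proof -
  define lo where "lo = fst (intv k p)"
  define hi where "hi = snd (intv k p)"
  have len: "hi = lo + 2 ^ (k - min k (length p))" using intv_len[of k p] by (simp add: lo_def hi_def)
  have t: "t lo = (lo \<le> ell)" "t hi = (hi \<le> ell)"
    "length p < k \<Longrightarrow> t ((lo + hi) div 2) = ((lo + hi) div 2 \<le> ell)"
    using g by (auto simp: good_def Let_def lo_def hi_def)
  show ?thesis
  proof (cases "correct k ell p")
    case True
    then have c: "lo \<le> ell" "ell < hi" by (auto simp: correct_def lo_def hi_def)
    then have nt: "\<not> (\<not> t lo \<or> t hi)" using t by auto
    have pc: "psi k ell p = int (length p)" using True by (simp add: psi_def cdepth_correct)
    show ?thesis
    proof (cases "k \<le> length p")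
      case True
      then have "nxt k t p = True # p" using nt by (simp add: nxt_def Let_def lo_def hi_def)
      moreover have "correct k ell (True # p)" using \<open>correct k ell p\<close> True by (simp add: correct_def)
      ultimately show ?thesis using pc by (simp add: psi_def)
    next
      case False
      define d where "d = ((lo + hi) div 2 \<le> ell)"
      have "nxt k t p = d # p"
        using nt t(3) False by (simp add: nxt_def Let_def lo_def hi_def d_def)
      moreover have "correct k ell (d # p)"
        using c False by (auto simp: correct_def Let_def lo_def[symmetric] hi_def[symmetric] d_def)
      ultimately show ?thesis using pc by (simp add: psi_def)
    qed
  next
    case False
    then have "\<not> (lo \<le> ell \<and> ell < hi)" by (auto simp: correct_def lo_def hi_def)
    then have "nxt k t p = tl p" using t by (auto simp: nxt_def Let_def lo_def hi_def)
    moreover obtain d q where "p = d # q" using False correct_root[OF ell] by (cases p) auto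
    ultimately show ?thesis using False by (simp add: psi_def)
  qed
qed

lemma cdepth_ge_correct: "ell < 2^k \<Longrightarrow> k \<le> cdepth k ell p \<Longrightarrow> correct k ell p"
proof (induction p)
  case Nil then show ?case by (simp add: correct_def)
next
  case (Cons d p)
  show ?case
  proof (cases "correct k ell (d # p)")
    case False
    then have "k \<le> cdepth k ell p" using Cons.prems by simp
    then have "correct k ell p" "k \<le> length p" using Cons.IH Cons.prems(1) cdepth_le[of k ell p] by auto
    then show ?thesis by (simp add: correct_def)
  qed simp
qed

lemma final_node: assumes "int k \<le> psi k ell p" "ell < 2^k"
  shows "k \<le> length p" "fst (intv k p) = ell"
proof -
  have "k \<le> cdepth k ell p" using assms cdepth_le[of k ell p] by (simp add: psi_def)
  then have "correct k ell p" "k \<le> length p" using cdepth_ge_correct[OF assms(2)] cdepth_le[of k ell p] by auto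
  then show "k \<le> length p" "fst (intv k p) = ell"
    using intv_len[of k p] by (auto simp: correct_def)
qed


lemma bits_mod: "(\<forall>t<r. bit (a::nat) t = bit b t) \<longleftrightarrow> a mod 2^r = b mod 2^r"
proof -
  have "a mod 2^r = b mod 2^r \<longleftrightarrow> take_bit r a = take_bit r b" by (simp add: take_bit_eq_mod)
  also have "\<dots> \<longleftrightarrow> (\<forall>t. bit (take_bit r a) t = bit (take_bit r b) t)" by (simp add: bit_eq_iff)
  also have "\<dots> \<longleftrightarrow> (\<forall>t<r. bit a t = bit b t)" by (auto simp: bit_take_bit_iff)
  finally show ?thesis by simp
qed


fun eqt :: "nat \<Rightarrow> ('x \<Rightarrow> nat) \<Rightarrow> ('y \<Rightarrow> nat) \<Rightarrow> ('x,'y) protocol \<Rightarrow> ('x,'y) protocol \<Rightarrow> ('x,'y) protocol" where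
  "eqt 0 fa fb pe pn = pe"
| "eqt (Suc s) fa fb pe pn =
     AliceNode (\<lambda>x. bit (fa x) s)
       (BobNode (\<lambda>y. bit (fb y) s) (eqt s fa fb pe pn) pn)
       (BobNode (\<lambda>y. bit (fb y) s) pn (eqt s fa fb pe pn))"

lemma run_eqt_bits: "run_protocol (eqt s fa fb pe pn) x y =
   (if (\<forall>t<s. bit (fa x) t = bit (fb y) t) then run_protocol pe x y else run_protocol pn x y)"
  by (induction s) (auto simp: less_Suc_eq)

lemma run_eqt: "run_protocol (eqt s fa fb pe pn) x y =
   (if fa x mod 2^s = fb y mod 2^s then run_protocol pe x y else run_protocol pn x y)"
  by (simp add: run_eqt_bits bits_mod)

lemma cost_eqt: "protocol_cost (eqt s fa fb pe pn) \<le> 2 * s + max (protocol_cost pe) (protocol_cost pn)"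
  by (induction s) auto

definition pref :: "nat \<Rightarrow> nat \<Rightarrow> nat \<Rightarrow> nat" where
  "pref M l z = z div 2 ^ (M - l)"

fun proto :: "nat \<Rightarrow> nat \<Rightarrow> nat \<Rightarrow> ('x \<Rightarrow> nat) \<Rightarrow> ('y \<Rightarrow> nat) \<Rightarrow> (nat \<Rightarrow> nat) list \<Rightarrow> bool list \<Rightarrow> ('x,'y) protocol" where
  "proto r M k iA jB [] p = (if k \<le> length p then
      AliceNode (\<lambda>x. even (pref M (Suc (fst (intv k p))) (iA x))) (Leaf False) (Leaf True)
    else Leaf False)"
| "proto r M k iA jB (G # cs) p =
    (let lo = fst (intv k p); hi = snd (intv k p);
         E = (\<lambda>l. eqt r (\<lambda>x. G (pref M l (iA x))) (\<lambda>y. G (pref M l (jB y))));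
         up = proto r M k iA jB cs (tl p)
     in E lo (E hi up (if k \<le> length p then proto r M k iA jB cs (True # p)
                       else E ((lo + hi) div 2) (proto r M k iA jB cs (True # p)) (proto r M k iA jB cs (False # p))))
          up)"

definition orc :: "nat \<Rightarrow> nat \<Rightarrow> nat \<Rightarrow> nat \<Rightarrow> (nat \<Rightarrow> nat) \<Rightarrow> nat \<Rightarrow> bool" where
  "orc r M i j G l \<longleftrightarrow> G (pref M l i) mod 2^r = G (pref M l j) mod 2^r"

definition finout :: "nat \<Rightarrow> nat \<Rightarrow> nat \<Rightarrow> bool list \<Rightarrow> bool" where
  "finout M k i q \<longleftrightarrow> k \<le> length q \<and> even (pref M (Suc (fst (intv k q))) i)"

lemma run_proto: "run_protocol (proto r M k iA jB cs p) x y =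
   finout M k (iA x) (fold (\<lambda>G. nxt k (orc r M (iA x) (jB y) G)) cs p)"
proof (induction cs arbitrary: p)
  case Nil then show ?case by (simp add: finout_def)
next
  case (Cons G cs)
  show ?case
    by (cases "k \<le> length p") (simp_all add: Let_def run_eqt Cons.IH nxt_def orc_def)
qed

lemma cost_proto: "protocol_cost (proto r M k iA jB cs p) \<le> 6 * r * length cs + 1"
proof (induction cs arbitrary: p)
  case Nil then show ?case by simp
next
  case (Cons G cs)
  let ?B = "6 * r * length cs + 1"
  have h: "\<And>q. protocol_cost (proto r M k iA jB cs q) \<le> ?B" using Cons.IH .
  define lo where "lo = fst (intv k p)"
  define hi where "hi = snd (intv k p)"
  define E where "E = (\<lambda>l. eqt r (\<lambda>x. G (pref M l (iA x))) (\<lambda>y. G (pref M l (jB y))))"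
  have cE: "protocol_cost (E l pe pn) \<le> 2 * r + b"
    if "protocol_cost pe \<le> b" "protocol_cost pn \<le> b" for l pe pn b
  proof -
    have "protocol_cost (E l pe pn) \<le> 2 * r + max (protocol_cost pe) (protocol_cost pn)"
      unfolding E_def by (rule cost_eqt)
    then show ?thesis using that by linarith
  qed
  define X where "X = (if k \<le> length p then proto r M k iA jB cs (True # p)
                       else E ((lo + hi) div 2) (proto r M k iA jB cs (True # p)) (proto r M k iA jB cs (False # p)))"
  have c1: "protocol_cost X \<le> 2 * r + ?B"
  proof (cases "k \<le> length p")
    case True then show ?thesis unfolding X_def using h[of "True # p"] by simp
  next
    case False then show ?thesis unfolding X_def by (simp only: if_False) (rule cE[OF h h])
  qed
  have h2: "protocol_cost (proto r M k iA jB cs (tl p)) \<le> 2 * r + ?B" using h[of "tl p"] by linarith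
  have c2: "protocol_cost (E hi (proto r M k iA jB cs (tl p)) X) \<le> 2 * r + (2 * r + ?B)"
    by (rule cE[OF h2 c1])
  have h3: "protocol_cost (proto r M k iA jB cs (tl p)) \<le> 2 * r + (2 * r + ?B)" using h[of "tl p"] by linarith
  have "protocol_cost (proto r M k iA jB (G # cs) p) = protocol_cost (E lo (E hi (proto r M k iA jB cs (tl p)) X) (proto r M k iA jB cs (tl p)))"
    by (simp only: proto.simps Let_def lo_def hi_def E_def X_def)
  also have "\<dots> \<le> 2 * r + (2 * r + (2 * r + ?B))"
    by (rule cE[OF c2 h3])
  finally show ?case by simp
qed

lemma psi_walk:
  assumes ell: "ell < 2^k"
  shows "psi k ell (fold (\<lambda>G. nxt k (tf G)) cs p) \<ge>
     psi k ell p + int (length cs) - 2 * int (bcount (\<lambda>G. nxt k (tf G)) (\<lambda>G p. \<not> good k ell (tf G) p) cs p)"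
proof (induction cs arbitrary: p)
  case Nil then show ?case by simp
next
  case (Cons G cs)
  have "psi k ell (nxt k (tf G) p) \<ge> psi k ell p + (if \<not> good k ell (tf G) p then -1 else 1)"
    using psi_any[OF ell, where t="tf G" and p=p] psi_good[OF ell, where t="tf G" and p=p] by auto
  then show ?case using Cons.IH[of "nxt k (tf G) p"] by auto
qed



lemma pref_mono: "l \<le> l' \<Longrightarrow> l' \<le> M \<Longrightarrow> pref M l z = pref M l' z div 2 ^ (l' - l)"
proof -
  assume a: "l \<le> l'" "l' \<le> M"
  have "M - l = (M - l') + (l' - l)" using a by simp
  then show ?thesis by (simp add: pref_def power_add div_mult2_eq)
qed

lemma pref_lt: "z < 2^M \<Longrightarrow> pref M l z < 2^M"
  unfolding pref_def by (meson div_le_dividend le_less_trans)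

definition ellf :: "nat \<Rightarrow> nat \<Rightarrow> nat \<Rightarrow> nat" where
  "ellf M i j = (GREATEST l. l \<le> M \<and> pref M l i = pref M l j)"

lemma ellf_props:
  assumes ij: "i \<noteq> j" "i < 2^M" "j < 2^M"
  shows "ellf M i j < M" "\<And>l. l \<le> M \<Longrightarrow> (pref M l i = pref M l j) = (l \<le> ellf M i j)"
    "even (pref M (Suc (ellf M i j)) i) = (i < j)"
proof -
  let ?P = "\<lambda>l. l \<le> M \<and> pref M l i = pref M l j"
  have p0: "?P 0" using ij by (simp add: pref_def)
  have bnd: "\<forall>y. ?P y \<longrightarrow> y \<le> M" by simp
  have Pe: "?P (ellf M i j)" unfolding ellf_def by (rule GreatestI_nat[where P="?P" and k=0 and b=M, OF p0]) simp
  have ge: "\<And>l. ?P l \<Longrightarrow> l \<le> ellf M i j" unfolding ellf_def by (rule Greatest_le_nat) auto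
  have "ellf M i j \<noteq> M" using Pe ij by (auto simp: pref_def)
  then show lt: "ellf M i j < M" using Pe by simp
  show eqv: "\<And>l. l \<le> M \<Longrightarrow> (pref M l i = pref M l j) = (l \<le> ellf M i j)"
  proof
    fix l assume "l \<le> M" "pref M l i = pref M l j" then show "l \<le> ellf M i j" using ge by simp
  next
    fix l assume "l \<le> M" "l \<le> ellf M i j"
    then show "pref M l i = pref M l j"
      using Pe pref_mono[of l "ellf M i j" M] by simp
  qed
  define e where "e = ellf M i j"
  define A where "A = pref M (Suc e) i"
  define B where "B = pref M (Suc e) j"
  have AB: "A \<noteq> B" using eqv[of "Suc e"] lt by (simp add: A_def B_def e_def)
  have half: "A div 2 = B div 2"
    using Pe pref_mono[of e "Suc e" M i] pref_mono[of e "Suc e" M j] lt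
    by (simp add: A_def B_def e_def)
  define f where "f = M - Suc e"
  have Ai: "A = i div 2^f" and Bj: "B = j div 2^f" by (simp_all add: A_def B_def pref_def f_def)
  have mono1: "A < B \<Longrightarrow> i < j"
  proof -
    assume "A < B"
    then have "A + 1 \<le> B" by simp
    have "i < (A + 1) * 2^f" using Ai
      by (metis div_less_iff_less_mult pos2 zero_less_power less_add_one)
    also have "\<dots> \<le> B * 2^f" using mult_le_mono1[OF \<open>A + 1 \<le> B\<close>] by simp
    also have "\<dots> \<le> j" using Bj by (simp add: div_times_less_eq_dividend)
    finally show "i < j" .
  qed
  have mono2: "B < A \<Longrightarrow> j < i"
  proof -
    assume "B < A"
    then have "B + 1 \<le> A" by simp
    have "j < (B + 1) * 2^f" using Bj
      by (metis div_less_iff_less_mult pos2 zero_less_power less_add_one)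
    also have "\<dots> \<le> A * 2^f" using mult_le_mono1[OF \<open>B + 1 \<le> A\<close>] by simp
    also have "\<dots> \<le> i" using Ai by (simp add: div_times_less_eq_dividend)
    finally show "j < i" .
  qed
  have "even A = (A < B)" using AB half by presburger
  then show "even (pref M (Suc (ellf M i j)) i) = (i < j)"
    using mono1 mono2 AB unfolding A_def[symmetric] e_def[symmetric]
    by (metis linorder_neqE_nat order_less_asym)
qed



lemma intv_le: "fst (intv k p) \<le> snd (intv k p) \<and> snd (intv k p) \<le> 2^k"
proof (induction p)
  case Nil then show ?case by simp
next
  case (Cons d p)
  then show ?case using intv_sub[of k p d] intv_len[of k "d # p"] by linarith
qed

lemma orc_exact:
  assumes "l \<le> M" "i \<noteq> j" "i < 2^M" "j < 2^M"
    and "\<not> (pref M l i \<noteq> pref M l j \<and> G (pref M l i) mod 2^r = G (pref M l j) mod 2^r)"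
  shows "orc r M i j G l = (l \<le> ellf M i j)"
  using assms ellf_props(2)[OF assms(2-4) assms(1)] unfolding orc_def by auto

lemma coll_bound:
  assumes "i < 2^M" "j < 2^M"
  shows "emeasure (measure_pmf (Gd {..<2^M} (2^r)))
     {G. pref M l i \<noteq> pref M l j \<and> G (pref M l i) mod 2^r = G (pref M l j) mod 2^r} \<le> ennreal (1 / 2^r)"
proof (cases "pref M l i = pref M l j")
  case True then show ?thesis by simp
next
  case False
  have "emeasure (measure_pmf (Gd {..<2^M} (2^r)))
     {G. pref M l i \<noteq> pref M l j \<and> G (pref M l i) mod 2^r = G (pref M l j) mod 2^r}
     = emeasure (measure_pmf (Gd {..<2^M} (2^r))) {G. G (pref M l i) mod 2^r = G (pref M l j) mod 2^r}"
    using False by simp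
  also have "\<dots> \<le> ennreal (1 / real (2^r))"
    by (rule collide) (use False pref_lt[OF assms(1)] in auto)
  finally show ?thesis by simp
qed

lemma bad_bound:
  assumes ij: "i \<noteq> j" "i < 2^(2^k)" "j < 2^(2^k)"
  shows "emeasure (measure_pmf (Gd {..<2^(2^k)} (2^r)))
     {G. \<not> good k (ellf (2^k) i j) (orc r (2^k) i j G) p} \<le> ennreal (3 / 2^r)"
proof -
  define M where "M = (2::nat)^k"
  define lo where "lo = fst (intv k p)"
  define hi where "hi = snd (intv k p)"
  define mid where "mid = (lo + hi) div 2"
  define C where "C = (\<lambda>l. {G::nat\<Rightarrow>nat. pref M l i \<noteq> pref M l j \<and> G (pref M l i) mod 2^r = G (pref M l j) mod (2::nat)^r})"
  have b: "lo \<le> M" "hi \<le> M" "mid \<le> M" using intv_le[of k p] by (auto simp: lo_def hi_def mid_def M_def)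
  have ij': "i < 2^M" "j < 2^M" using ij by (auto simp: M_def)
  have sub: "{G. \<not> good k (ellf M i j) (orc r M i j G) p} \<subseteq> C lo \<union> C hi \<union> C mid"
  proof
    fix G assume "G \<in> {G. \<not> good k (ellf M i j) (orc r M i j G) p}"
    then have ng: "\<not> good k (ellf M i j) (orc r M i j G) p" by simp
    show "G \<in> C lo \<union> C hi \<union> C mid"
    proof (rule ccontr)
      assume "G \<notin> C lo \<union> C hi \<union> C mid"
      then have "orc r M i j G lo = (lo \<le> ellf M i j)" "orc r M i j G hi = (hi \<le> ellf M i j)"
        "orc r M i j G mid = (mid \<le> ellf M i j)"
        using orc_exact[OF _ ij(1) ij'] b unfolding C_def by blast+
      then show False using ng unfolding good_def Let_def lo_def[symmetric] hi_def[symmetric] mid_def[symmetric]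
        by simp
    qed
  qed
  have "emeasure (measure_pmf (Gd {..<2^M} (2^r))) {G. \<not> good k (ellf M i j) (orc r M i j G) p}
     \<le> emeasure (measure_pmf (Gd {..<2^M} (2^r))) (C lo \<union> C hi \<union> C mid)"
    by (rule emeasure_mono[OF sub]) simp
  also have "\<dots> \<le> emeasure (measure_pmf (Gd {..<2^M} (2^r))) (C lo \<union> C hi) + emeasure (measure_pmf (Gd {..<2^M} (2^r))) (C mid)"
    by (rule emeasure_subadditive) auto
  also have "\<dots> \<le> (emeasure (measure_pmf (Gd {..<2^M} (2^r))) (C lo) + emeasure (measure_pmf (Gd {..<2^M} (2^r))) (C hi)) + emeasure (measure_pmf (Gd {..<2^M} (2^r))) (C mid)"
    by (intro add_mono emeasure_subadditive) auto
  also have "\<dots> \<le> (ennreal (1/2^r) + ennreal (1/2^r)) + ennreal (1/2^r)"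
    unfolding C_def by (intro add_mono coll_bound ij')
  also have "\<dots> = ennreal (3 / 2^r)"
    by (simp flip: ennreal_plus)
  finally show ?thesis by (simp add: M_def)
qed



lemma numeric: "real ((3*k) choose (Suc k)) * (3/2^6) ^ Suc k \<le> 1 / 2^k"
proof -
  have c: "real ((3*k) choose (Suc k)) \<le> 8^k"
  proof -
    have "(3*k) choose (Suc k) \<le> 2^(3*k)" by (rule binomial_le_pow2)
    also have "(2::nat)^(3*k) = 8^k" by (simp add: power_mult)
    finally show ?thesis by (metis of_nat_le_iff of_nat_numeral of_nat_power)
  qed
  have q: "(3/2^6::real) ^ Suc k \<le> (1/16)^k"
  proof -
    have "(3/2^6::real) ^ Suc k \<le> (3/2^6) ^ k" by (rule power_decreasing) auto
    also have "\<dots> \<le> (1/16)^k" by (rule power_mono) auto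
    finally show ?thesis .
  qed
  have "real ((3*k) choose (Suc k)) * (3/2^6) ^ Suc k \<le> 8^k * (1/16)^k"
    by (rule mult_mono[OF c q]) auto
  also have "\<dots> = (1/2)^k" by (simp flip: power_mult_distrib)
  also have "\<dots> = 1 / 2^k" by (simp add: power_divide)
  finally show ?thesis .
qed

definition gtR :: "nat \<Rightarrow> ('x \<Rightarrow> nat) \<Rightarrow> ('y \<Rightarrow> nat) \<Rightarrow> ('x, 'y) rand_protocol" where
  "gtR k iA jB = map_pmf (\<lambda>cs. proto 6 (2^k) k iA jB cs []) (coins (Gd {..<2^(2^k)} (2^6)) (3*k))"

lemma gtR_cost: "rand_cost_le (gtR k iA jB) (real (108 * k + 1))"
  unfolding rand_cost_le_def gtR_def
proof
  fix p assume "p \<in> set_pmf (map_pmf (\<lambda>cs. proto 6 (2^k) k iA jB cs []) (coins (Gd {..<2^(2^k)} (2^6)) (3*k)))"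
  then obtain cs where cs: "cs \<in> set_pmf (coins (Gd {..<2^(2^k)} (2^6)) (3*k))" "p = proto 6 (2^k) k iA jB cs []"
    by auto
  have "length cs = 3 * k" using set_coins[OF cs(1)] .
  then have "protocol_cost p \<le> 108 * k + 1" using cost_proto[of 6 "2^k" k iA jB cs "[]"] cs(2) by simp
  then show "real (protocol_cost p) \<le> real (108 * k + 1)" by linarith
qed

lemma gtR_error:
  assumes ij: "iA x \<noteq> jB y" "iA x < 2^(2^k)" "jB y < 2^(2^k)"
  shows "error_prob (gtR k iA jB) x y (iA x < jB y) \<le> 1 / 2^k"
proof -
  define i where "i = iA x"
  define j where "j = jB y"
  define M where "M = (2::nat)^k"
  define ell where "ell = ellf M i j"
  define Gdd where "Gdd = Gd {..<2^M} (2^6)"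
  define nx where "nx = (\<lambda>G. nxt k (orc 6 M i j G))"
  define bd where "bd = (\<lambda>G p. \<not> good k ell (orc 6 M i j G) p)"
  have ij': "i \<noteq> j" "i < 2^M" "j < 2^M" using ij by (auto simp: i_def j_def M_def)
  have ell: "ell < 2^k" using ellf_props(1)[OF ij'] by (simp add: ell_def M_def)
  have fin: "even (pref M (Suc ell) i) = (i < j)" using ellf_props(3)[OF ij'] by (simp add: ell_def)
  have wrong: "cs \<in> {cs. Suc k \<le> bcount nx bd cs []}"
    if "cs \<in> set_pmf (coins Gdd (3*k))" "cs \<in> {cs. run_protocol (proto 6 M k iA jB cs []) x y \<noteq> (i < j)}" for cs
  proof (rule ccontr)
    assume "cs \<notin> {cs. Suc k \<le> bcount nx bd cs []}"
    then have bc: "bcount nx bd cs [] \<le> k" by simp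
    have len: "length cs = 3 * k" using set_coins that(1) by blast
    have "psi k ell (fold nx cs []) \<ge> psi k ell [] + int (length cs) - 2 * int (bcount nx bd cs [])"
      unfolding nx_def bd_def by (rule psi_walk[OF ell])
    then have "int k \<le> psi k ell (fold nx cs [])" using bc len by (simp add: psi_def)
    from final_node[OF this ell] have "finout M k i (fold nx cs []) = (i < j)"
      using fin by (simp add: finout_def)
    then show False using that(2) run_proto[of 6 M k iA jB cs "[]" x y]
      by (simp add: nx_def i_def j_def)
  qed
  have "emeasure (measure_pmf (coins Gdd (3*k))) {cs. run_protocol (proto 6 M k iA jB cs []) x y \<noteq> (i < j)}
     \<le> emeasure (measure_pmf (coins Gdd (3*k))) {cs. Suc k \<le> bcount nx bd cs []}"
  proof (rule emeasure_mono_AE)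
    show "AE cs in measure_pmf (coins Gdd (3*k)). cs \<in> {cs. run_protocol (proto 6 M k iA jB cs []) x y \<noteq> (i < j)} \<longrightarrow> cs \<in> {cs. Suc k \<le> bcount nx bd cs []}"
      by (rule AE_pmfI) (use wrong in blast)
  qed simp
  also have "\<dots> \<le> ennreal (real ((3*k) choose (Suc k)) * (3/2^6) ^ Suc k)"
  proof (rule bcount_bound)
    fix p
    show "emeasure (measure_pmf Gdd) {G. bd G p} \<le> ennreal (3 / 2 ^ 6)"
      using bad_bound[OF ij'[unfolded M_def], of 6 p] by (simp add: Gdd_def bd_def ell_def M_def)
  qed simp
  also have "\<dots> \<le> ennreal (1 / 2^k)" by (intro ennreal_leI numeric)
  finally have e: "emeasure (measure_pmf (coins Gdd (3*k))) {cs. run_protocol (proto 6 M k iA jB cs []) x y \<noteq> (i < j)} \<le> ennreal (1 / 2^k)" .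
  have "error_prob (gtR k iA jB) x y (iA x < jB y)
      = measure (measure_pmf (coins Gdd (3*k))) {cs. run_protocol (proto 6 M k iA jB cs []) x y \<noteq> (i < j)}"
    by (simp add: error_prob_def gtR_def Gdd_def M_def i_def j_def vimage_def)
  also have "\<dots> \<le> 1 / 2^k"
    using e by (simp add: measure_pmf.emeasure_eq_measure)
  finally show ?thesis .
qed



definition rk :: "int set \<Rightarrow> int \<Rightarrow> nat" where
  "rk W z = card {w \<in> W. w < z}"

lemma rk_less: assumes "finite W" "z \<in> W" "z' \<in> W" "z < z'" shows "rk W z < rk W z'"
  unfolding rk_def using assms by (intro psubset_card_mono) auto

lemma rk_le_iff: assumes "finite W" "z \<in> W" "z' \<in> W" shows "rk W z \<le> rk W z' \<longleftrightarrow> z \<le> z'"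
  using rk_less[OF assms(1,2,3)] rk_less[OF assms(1,3,2)]
  by (metis leD linorder_le_less_linear order_le_less)

lemma rk_bound: assumes "finite W" "z \<in> W" shows "rk W z < card W"
  unfolding rk_def using assms by (intro psubset_card_mono) auto

lemma main_case:
  assumes n2: "n \<ge> 2" and disj: "P1 \<inter> P2 = {}" and un: "P1 \<union> P2 = {..<n}"
  shows "\<exists>R :: (nat \<Rightarrow> bool, nat \<Rightarrow> bool) rand_protocol.
          rand_cost_le R (325 * log 2 (real n)) \<and>
          (\<forall>x :: nat \<Rightarrow> bool.
             error_prob R (view P1 x) (view P2 x) (threshold_fn n a b x) \<le> 1 / real n)"
proof -
  obtain m where m: "2^m \<le> n" "n < 2^(m+1)" using ex_power_ivl1[of 2 n] n2 by auto
  have m1: "m \<ge> 1" using m n2 by (cases m) auto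
  define k where "k = m + 2"
  have fin1: "finite P1" and fin2: "finite P2" using un by (metis finite_Un finite_lessThan)+
  define sA where "sA = (\<lambda>xv::nat\<Rightarrow>bool. \<Sum>i\<in>P1. a i * (if xv i then 1 else 0))"
  define tB where "tB = (\<lambda>yv::nat\<Rightarrow>bool. b - (\<Sum>i\<in>P2. a i * (if yv i then 1 else 0)))"
  define VA where "VA = (\<lambda>S. \<Sum>i\<in>S. a i) ` Pow P1"
  define VB where "VB = (\<lambda>S. b - (\<Sum>i\<in>S. a i)) ` Pow P2"
  define W where "W = VA \<union> VB"
  have finW: "finite W" unfolding W_def VA_def VB_def using fin1 fin2 by simp
  have sAW: "sA xv \<in> W" for xv
  proof -
    have "sA xv = (\<Sum>i\<in>{i\<in>P1. xv i}. a i)"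
      unfolding sA_def using fin1 by (subst sum.inter_filter) (auto intro: sum.cong)
    then show ?thesis unfolding W_def VA_def by auto
  qed
  have tBW: "tB yv \<in> W" for yv
  proof -
    have "tB yv = b - (\<Sum>i\<in>{i\<in>P2. yv i}. a i)"
      unfolding tB_def using fin2 by (subst sum.inter_filter) (auto intro: sum.cong)
    then show ?thesis unfolding W_def VB_def by auto
  qed
  have cardW: "card W \<le> 2^(n+1)"
  proof -
    have "card W \<le> card VA + card VB" unfolding W_def by (rule card_Un_le)
    also have "card VA \<le> 2 ^ card P1" unfolding VA_def
      using card_image_le[of "Pow P1"] fin1 by (metis card_Pow finite_Pow_iff)
    also have "card VB \<le> 2 ^ card P2" unfolding VB_def
      using card_image_le[of "Pow P2"] fin2 by (metis card_Pow finite_Pow_iff)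
    also have "card P1 \<le> n" using un by (metis card_lessThan card_mono finite_lessThan sup.cobounded1)
    also have "card P2 \<le> n" using un by (metis card_lessThan card_mono finite_lessThan sup.cobounded2)
    finally show ?thesis by simp
  qed
  define iA where "iA = (\<lambda>xv. 2 * rk W (sA xv))"
  define jB where "jB = (\<lambda>yv. 2 * rk W (tB yv) + 1)"
  have big: "2 * card W \<le> 2^(2^k)"
  proof -
    have "n + 2 \<le> 2^k" using m n2 by (simp add: k_def)
    then have "(2::nat)^(n+2) \<le> 2^(2^k)" by (rule power_increasing) simp
    moreover have "2 * card W \<le> 2^(n+2)" using cardW by simp
    ultimately show ?thesis by linarith
  qed
  define R where "R = gtR k iA jB"
  show ?thesis
  proof (intro exI conjI allI)
    have "rand_cost_le R (real (108 * k + 1))" unfolding R_def by (rule gtR_cost)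
    moreover have "real (108 * k + 1) \<le> 325 * log 2 (real n)"
    proof -
      have "real m \<le> log 2 (real n)" using le_log2_of_power[OF m(1)] .
      then show ?thesis using m1 by (simp add: k_def)
    qed
    ultimately show "rand_cost_le R (325 * log 2 (real n))"
      unfolding rand_cost_le_def using order_trans by blast
  next
    fix x :: "nat \<Rightarrow> bool"
    define xa where "xa = view P1 x"
    define yb where "yb = view P2 x"
    have thr: "threshold_fn n a b x = (sA xa \<le> tB yb)"
    proof -
      have "(\<Sum>i<n. a i * (if x i then 1 else 0)) = (\<Sum>i\<in>P1. a i * (if x i then 1 else 0)) + (\<Sum>i\<in>P2. a i * (if x i then 1 else 0))"
        using sum.union_disjoint[OF fin1 fin2 disj] un by simp
      moreover have "sA xa = (\<Sum>i\<in>P1. a i * (if x i then 1 else 0))"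
        unfolding sA_def xa_def view_def by (intro sum.cong) auto
      moreover have "tB yb = b - (\<Sum>i\<in>P2. a i * (if x i then 1 else 0))"
        unfolding tB_def yb_def view_def by (intro arg_cong[where f="\<lambda>s. b - s"] sum.cong) auto
      ultimately show ?thesis unfolding threshold_fn_def by linarith
    qed
    have ij: "iA xa \<noteq> jB yb" unfolding iA_def jB_def by presburger
    have ilt: "iA xa < 2^(2^k)" using rk_bound[OF finW sAW, of xa] big unfolding iA_def by linarith
    have jlt: "jB yb < 2^(2^k)" using rk_bound[OF finW tBW, of yb] big unfolding jB_def by linarith
    have "iA xa < jB yb \<longleftrightarrow> rk W (sA xa) \<le> rk W (tB yb)" unfolding iA_def jB_def by linarith
    also have "\<dots> \<longleftrightarrow> sA xa \<le> tB yb" by (rule rk_le_iff[OF finW sAW tBW])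
    finally have eqv: "threshold_fn n a b x = (iA xa < jB yb)" using thr by simp
    have "error_prob R xa yb (iA xa < jB yb) \<le> 1 / 2^k"
      unfolding R_def by (rule gtR_error[where iA=iA and jB=jB and x=xa and y=yb, OF ij ilt jlt])
    also have "(1::real) / 2^k \<le> 1 / real n"
    proof -
      have "(2::nat)^(m+1) \<le> 2^k" by (rule power_increasing) (simp_all add: k_def)
      then have "n \<le> 2^k" using m(2) by linarith
      then have "real n \<le> real (2^k)" by (simp only: of_nat_le_iff)
      then have "real n \<le> 2^k" by simp
      then show ?thesis using n2 by (simp add: frac_le)
    qed
    finally show "error_prob R (view P1 x) (view P2 x) (threshold_fn n a b x) \<le> 1 / real n"
      using eqv by (simp add: xa_def yb_def)
  qed
qed

theorem lemma4:
  shows "\<exists>C1 C2 :: real. C1 > 0 \<and> C2 > 0 \<and>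
    (\<forall>(n::nat) (a::nat \<Rightarrow> int) (b::int) (P1::nat set) (P2::nat set).
       n \<ge> 1 \<longrightarrow> P1 \<inter> P2 = {} \<longrightarrow> P1 \<union> P2 = {..<n} \<longrightarrow>
       (\<exists>R :: (nat \<Rightarrow> bool, nat \<Rightarrow> bool) rand_protocol.
          rand_cost_le R (C2 * log 2 (real n)) \<and>
          (\<forall>x :: nat \<Rightarrow> bool.
             error_prob R (view P1 x) (view P2 x) (threshold_fn n a b x) \<le> C1 / real n)))"
proof (rule exI[where x=1], rule exI[where x=325], intro conjI allI impI)
  fix n :: nat and a :: "nat \<Rightarrow> int" and b :: int and P1 P2 :: "nat set"
  assume n1: "n \<ge> 1" and disj: "P1 \<inter> P2 = {}" and un: "P1 \<union> P2 = {..<n}"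
  show "\<exists>R :: (nat \<Rightarrow> bool, nat \<Rightarrow> bool) rand_protocol.
          rand_cost_le R (325 * log 2 (real n)) \<and>
          (\<forall>x :: nat \<Rightarrow> bool.
             error_prob R (view P1 x) (view P2 x) (threshold_fn n a b x) \<le> 1 / real n)"
  proof (cases "n \<ge> 2")
    case True then show ?thesis using main_case[OF True disj un] by blast
  next
    case False
    then have n: "n = 1" using n1 by simp
    show ?thesis
    proof (intro exI conjI allI)
      show "rand_cost_le (return_pmf (Leaf True)) (325 * log 2 (real n))"
        by (simp add: rand_cost_le_def n)
      fix x
      show "error_prob (return_pmf (Leaf True)) (view P1 x) (view P2 x) (threshold_fn n a b x) \<le> 1 / real n"
        unfolding error_prob_def n by (simp add: measure_pmf.prob_le_1)
    qed
  qed
qed simp_all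

end
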